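(* Let $D=T_k$. Then the almost-sure theory of the class of all finite $D$-coloured digraphs equals the first-order theory of $C_D$.
   Context: $T_k$ is the transitive tournament $(\{1,\dots,k\};<)$. A $D$-coloured digraph is a digraph $G$ with unary predicates $P_u$, $u\in V(D)$, such that each vertex lies in exactly one $P_u$ and the map $x\mapsto u$ for $x\in P_u$ is a homomorphism $G\to D$. The almost-sure theory of this class is the set of first-order sentences in the signature $\{E\}\cup\{P_u:u\in V(D)\}$ whose fraction of satisfying $D$-coloured digraphs with vertex set $\{1,\dots,n\}$ tends to $1$. $C_D$ is the (up to isomorphism unique) countable homogeneous $D$-coloured digraph whose finite substructures are, up to isomorphism, exactly the finite $D$-coloured digraphs. *)

theory Defs
  imports Complex_Main "HOL-Library.Countable_Set"
begin

text \<open>Variables are natural numbers. Colour predicates P_u are indexed by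
  natural numbers u; the vertices of D = T_k are 1..k.\<close>

datatype fm =
    FEq nat nat
  | FEdge nat nat
  | FCol nat nat     \<comment> \<open>FCol u i  means  P_u(x_i)\<close>
  | FNeg fm
  | FConj fm fm
  | FEx nat fm

fun free_vars :: "fm \<Rightarrow> nat set" where
  "free_vars (FEq i j) = {i, j}"
| "free_vars (FEdge i j) = {i, j}"
| "free_vars (FCol u i) = {i}"
| "free_vars (FNeg \<phi>) = free_vars \<phi>"
| "free_vars (FConj \<phi> \<psi>) = free_vars \<phi> \<union> free_vars \<psi>"
| "free_vars (FEx i \<phi>) = free_vars \<phi> - {i}"

fun colours :: "fm \<Rightarrow> nat set" where
  "colours (FEq i j) = {}"
| "colours (FEdge i j) = {}"
| "colours (FCol u i) = {u}"
| "colours (FNeg \<phi>) = colours \<phi>"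
| "colours (FConj \<phi> \<psi>) = colours \<phi> \<union> colours \<psi>"
| "colours (FEx i \<phi>) = colours \<phi>"

definition sentence :: "nat \<Rightarrow> fm \<Rightarrow> bool" where
  "sentence k \<phi> \<longleftrightarrow> free_vars \<phi> = {} \<and> colours \<phi> \<subseteq> {1..k}"

fun sat :: "'a set \<Rightarrow> ('a \<Rightarrow> 'a \<Rightarrow> bool) \<Rightarrow> (nat \<Rightarrow> 'a \<Rightarrow> bool)
            \<Rightarrow> (nat \<Rightarrow> 'a) \<Rightarrow> fm \<Rightarrow> bool" where
  "sat V E P \<rho> (FEq i j) \<longleftrightarrow> \<rho> i = \<rho> j"
| "sat V E P \<rho> (FEdge i j) \<longleftrightarrow> E (\<rho> i) (\<rho> j)"
| "sat V E P \<rho> (FCol u i) \<longleftrightarrow> P u (\<rho> i)"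
| "sat V E P \<rho> (FNeg \<phi>) \<longleftrightarrow> \<not> sat V E P \<rho> \<phi>"
| "sat V E P \<rho> (FConj \<phi> \<psi>) \<longleftrightarrow> sat V E P \<rho> \<phi> \<and> sat V E P \<rho> \<psi>"
| "sat V E P \<rho> (FEx i \<phi>) \<longleftrightarrow> (\<exists>x\<in>V. sat V E P (\<rho>(i := x)) \<phi>)"

text \<open>Truth of a sentence (the assignment is irrelevant; we take all assignments
  into V, which is correct also for the empty structure).\<close>
definition models :: "'a set \<Rightarrow> ('a \<Rightarrow> 'a \<Rightarrow> bool) \<Rightarrow> (nat \<Rightarrow> 'a \<Rightarrow> bool) \<Rightarrow> fm \<Rightarrow> bool" where
  "models V E P \<phi> \<longleftrightarrow> (\<forall>\<rho>. (\<forall>i. \<rho> i \<in> V) \<longrightarrow> sat V E P \<rho> \<phi>)"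

text \<open>T_k = ({1..k}; <).\<close>
definition Tk_coloured_digraph ::
  "nat \<Rightarrow> 'a set \<Rightarrow> ('a \<Rightarrow> 'a \<Rightarrow> bool) \<Rightarrow> (nat \<Rightarrow> 'a \<Rightarrow> bool) \<Rightarrow> bool" where
  "Tk_coloured_digraph k V E P \<longleftrightarrow>
     (\<forall>x y. E x y \<longrightarrow> x \<in> V \<and> y \<in> V \<and> x \<noteq> y) \<and>
     (\<forall>u x. P u x \<longrightarrow> u \<in> {1..k} \<and> x \<in> V) \<and>
     (\<forall>x\<in>V. \<exists>!u. P u x) \<and>
     (\<forall>x y u v. E x y \<longrightarrow> P u x \<longrightarrow> P v y \<longrightarrow> u < v)"

definition almost_sure :: "nat \<Rightarrow> fm \<Rightarrow> bool" where
  "almost_sure k \<phi> \<longleftrightarrow>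
     (\<lambda>n. real (card {(E, P). Tk_coloured_digraph k {1..n} E P \<and> models {1..n} E P \<phi>})
          / real (card {(E, P). Tk_coloured_digraph k {1..n} E P}))
     \<longlonglongrightarrow> 1"

definition embedding ::
  "('b \<Rightarrow> 'a) \<Rightarrow> 'b set \<Rightarrow> ('b \<Rightarrow> 'b \<Rightarrow> bool) \<Rightarrow> (nat \<Rightarrow> 'b \<Rightarrow> bool)
   \<Rightarrow> 'a set \<Rightarrow> ('a \<Rightarrow> 'a \<Rightarrow> bool) \<Rightarrow> (nat \<Rightarrow> 'a \<Rightarrow> bool) \<Rightarrow> bool" where
  "embedding f V E P V' E' P' \<longleftrightarrow>
     inj_on f V \<and> f ` V \<subseteq> V' \<and>
     (\<forall>x\<in>V. \<forall>y\<in>V. E' (f x) (f y) \<longleftrightarrow> E x y) \<and>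
     (\<forall>u. \<forall>x\<in>V. P' u (f x) \<longleftrightarrow> P u x)"

definition homogeneous :: "'a set \<Rightarrow> ('a \<Rightarrow> 'a \<Rightarrow> bool) \<Rightarrow> (nat \<Rightarrow> 'a \<Rightarrow> bool) \<Rightarrow> bool" where
  "homogeneous V E P \<longleftrightarrow>
     (\<forall>A B g. finite A \<and> A \<subseteq> V \<and> B \<subseteq> V \<and> bij_betw g A B \<and>
        (\<forall>x\<in>A. \<forall>y\<in>A. E (g x) (g y) \<longleftrightarrow> E x y) \<and>
        (\<forall>u. \<forall>x\<in>A. P u (g x) \<longleftrightarrow> P u x)
      \<longrightarrow> (\<exists>h. bij_betw h V V \<and> embedding h V E P V E P \<and> (\<forall>x\<in>A. h x = g x)))"

text \<open>C_D: a countable homogeneous T_k-coloured digraph whose finite induced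
  substructures are (up to isomorphism) exactly the finite T_k-coloured digraphs.
  Since it is itself T_k-coloured, its finite substructures are T_k-coloured
  digraphs; the other inclusion says every finite T_k-coloured digraph embeds
  (finite digraphs are represented, up to isomorphism, on subsets of nat).\<close>
definition is_C_Tk :: "nat \<Rightarrow> 'a set \<Rightarrow> ('a \<Rightarrow> 'a \<Rightarrow> bool) \<Rightarrow> (nat \<Rightarrow> 'a \<Rightarrow> bool) \<Rightarrow> bool" where
  "is_C_Tk k V E P \<longleftrightarrow>
     countable V \<and> Tk_coloured_digraph k V E P \<and> homogeneous V E P \<and>
     (\<forall>(W :: nat set) F Q. finite W \<and> Tk_coloured_digraph k W F Q \<longrightarrow>
        (\<exists>f. embedding f W F Q V E P))"

end

theory Submission
  imports Defs "HOL-Library.FuncSet" "HOL-Real_Asymp.Real_Asymp"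
begin

fun qd :: "fm \<Rightarrow> nat" where
  "qd (FEq i j) = 0"
| "qd (FEdge i j) = 0"
| "qd (FCol u i) = 0"
| "qd (FNeg \<phi>) = qd \<phi>"
| "qd (FConj \<phi> \<psi>) = max (qd \<phi>) (qd \<psi>)"
| "qd (FEx i \<phi>) = Suc (qd \<phi>)"

definition ext_prop :: "nat \<Rightarrow> nat \<Rightarrow> 'a set \<Rightarrow> ('a \<Rightarrow> 'a \<Rightarrow> bool) \<Rightarrow> (nat \<Rightarrow> 'a \<Rightarrow> bool) \<Rightarrow> bool" where
  "ext_prop k N V E P \<longleftrightarrow> (\<forall>A Sin Sout u. finite A \<and> A \<subseteq> V \<and> card A \<le> N \<and> u \<in> {1..k} \<and>
     Sin \<subseteq> A \<and> Sout \<subseteq> A \<and> (\<forall>a\<in>Sin. \<forall>v. P v a \<longrightarrow> v < u) \<and> (\<forall>a\<in>Sout. \<forall>v. P v a \<longrightarrow> u < v)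
     \<longrightarrow> (\<exists>z\<in>V. z \<notin> A \<and> P u z \<and> (\<forall>a\<in>A. E a z \<longleftrightarrow> a \<in> Sin) \<and> (\<forall>a\<in>A. E z a \<longleftrightarrow> a \<in> Sout)))"

definition piso where
  "piso E1 P1 E2 P2 X (\<rho>1 :: nat \<Rightarrow> 'a) (\<rho>2 :: nat \<Rightarrow> 'b) \<longleftrightarrow> (\<forall>j\<in>X. \<forall>j'\<in>X.
     (\<rho>1 j = \<rho>1 j' \<longleftrightarrow> \<rho>2 j = \<rho>2 j') \<and> (E1 (\<rho>1 j) (\<rho>1 j') \<longleftrightarrow> E2 (\<rho>2 j) (\<rho>2 j')) \<and>
     (\<forall>u. P1 u (\<rho>1 j) \<longleftrightarrow> P2 u (\<rho>2 j)))"

lemma piso_sym: "piso E1 P1 E2 P2 X \<rho>1 \<rho>2 \<Longrightarrow> piso E2 P2 E1 P1 X \<rho>2 \<rho>1"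
  unfolding piso_def by metis

lemma piso_mono: "piso E1 P1 E2 P2 X \<rho>1 \<rho>2 \<Longrightarrow> Y \<subseteq> X \<Longrightarrow> piso E1 P1 E2 P2 Y \<rho>1 \<rho>2"
  unfolding piso_def by blast

lemma forth:
  assumes T1: "Tk_coloured_digraph k V1 E1 P1" and T2: "Tk_coloured_digraph k V2 E2 P2"
    and ext: "ext_prop k N V2 E2 P2" and fin: "finite Y" and cY: "card Y \<le> N"
    and iY: "i \<notin> Y" and r2: "\<forall>j. \<rho>2 j \<in> V2"
    and pi: "piso E1 P1 E2 P2 Y \<rho>1 \<rho>2" and x: "x \<in> V1"
  shows "\<exists>y\<in>V2. piso E1 P1 E2 P2 (insert i Y) (\<rho>1(i := x)) (\<rho>2(i := y))"
proof (cases "\<exists>j\<in>Y. \<rho>1 j = x")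
  case True
  then obtain j where j: "j \<in> Y" "\<rho>1 j = x" by blast
  show ?thesis
  proof (intro bexI[of _ "\<rho>2 j"])
    show "\<rho>2 j \<in> V2" using r2 by blast
    show "piso E1 P1 E2 P2 (insert i Y) (\<rho>1(i := x)) (\<rho>2(i := \<rho>2 j))"
      using pi j iY unfolding piso_def by (auto split: if_splits)
  qed
next
  case False
  from T1 x obtain u where u: "P1 u x" "\<And>v. P1 v x \<Longrightarrow> v = u"
    unfolding Tk_coloured_digraph_def by metis
  have uk: "u \<in> {1..k}" using T1 u unfolding Tk_coloured_digraph_def by blast
  define A where "A = \<rho>2 ` Y"
  define Sin where "Sin = \<rho>2 ` {j\<in>Y. E1 (\<rho>1 j) x}"
  define Sout where "Sout = \<rho>2 ` {j\<in>Y. E1 x (\<rho>1 j)}"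
  have "finite A" "A \<subseteq> V2" "card A \<le> N" "Sin \<subseteq> A" "Sout \<subseteq> A"
    using fin cY r2 card_image_le[OF fin, of \<rho>2] unfolding A_def Sin_def Sout_def by auto
  moreover have "\<forall>a\<in>Sin. \<forall>v. P2 v a \<longrightarrow> v < u"
  proof (intro ballI allI impI)
    fix a v assume "a \<in> Sin" "P2 v a"
    then obtain j where "j \<in> Y" "E1 (\<rho>1 j) x" "a = \<rho>2 j" unfolding Sin_def by blast
    then have "P1 v (\<rho>1 j)" using pi \<open>P2 v a\<close> unfolding piso_def by blast
    then show "v < u" using T1 \<open>E1 (\<rho>1 j) x\<close> u unfolding Tk_coloured_digraph_def by blast
  qed
  moreover have "\<forall>a\<in>Sout. \<forall>v. P2 v a \<longrightarrow> u < v"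
  proof (intro ballI allI impI)
    fix a v assume "a \<in> Sout" "P2 v a"
    then obtain j where "j \<in> Y" "E1 x (\<rho>1 j)" "a = \<rho>2 j" unfolding Sout_def by blast
    then have "P1 v (\<rho>1 j)" using pi \<open>P2 v a\<close> unfolding piso_def by blast
    then show "u < v" using T1 \<open>E1 x (\<rho>1 j)\<close> u unfolding Tk_coloured_digraph_def by blast
  qed
  ultimately obtain z where z: "z \<in> V2" "z \<notin> A" "P2 u z" "\<forall>a\<in>A. E2 a z \<longleftrightarrow> a \<in> Sin"
     "\<forall>a\<in>A. E2 z a \<longleftrightarrow> a \<in> Sout"
    using ext uk unfolding ext_prop_def by blast
  have u': "\<And>v. P1 v x \<longleftrightarrow> v = u" using u by blast
  have zu: "\<And>v. P2 v z \<longleftrightarrow> v = u"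
    using T2 z(1,3) unfolding Tk_coloured_digraph_def by metis
  have nl1: "\<not> E1 x x" using T1 unfolding Tk_coloured_digraph_def by blast
  have nl2: "\<not> E2 z z" using T2 unfolding Tk_coloured_digraph_def by blast
  have in1: "E2 (\<rho>2 j) z \<longleftrightarrow> E1 (\<rho>1 j) x" if "j \<in> Y" for j
  proof -
    have "E2 (\<rho>2 j) z \<longleftrightarrow> \<rho>2 j \<in> Sin" using z(4) that unfolding A_def by blast
    also have "\<dots> \<longleftrightarrow> E1 (\<rho>1 j) x"
    proof
      assume "\<rho>2 j \<in> Sin"
      then obtain j' where "j' \<in> Y" "E1 (\<rho>1 j') x" "\<rho>2 j = \<rho>2 j'" unfolding Sin_def by blast
      then have "\<rho>1 j = \<rho>1 j'" using pi that unfolding piso_def by blast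
      then show "E1 (\<rho>1 j) x" using \<open>E1 (\<rho>1 j') x\<close> by simp
    next
      assume "E1 (\<rho>1 j) x"
      then show "\<rho>2 j \<in> Sin" using that unfolding Sin_def by blast
    qed
    finally show ?thesis .
  qed
  have out1: "E2 z (\<rho>2 j) \<longleftrightarrow> E1 x (\<rho>1 j)" if "j \<in> Y" for j
  proof -
    have "E2 z (\<rho>2 j) \<longleftrightarrow> \<rho>2 j \<in> Sout" using z(5) that unfolding A_def by blast
    also have "\<dots> \<longleftrightarrow> E1 x (\<rho>1 j)"
    proof
      assume "\<rho>2 j \<in> Sout"
      then obtain j' where "j' \<in> Y" "E1 x (\<rho>1 j')" "\<rho>2 j = \<rho>2 j'" unfolding Sout_def by blast
      then have "\<rho>1 j = \<rho>1 j'" using pi that unfolding piso_def by blast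
      then show "E1 x (\<rho>1 j)" using \<open>E1 x (\<rho>1 j')\<close> by simp
    next
      assume "E1 x (\<rho>1 j)"
      then show "\<rho>2 j \<in> Sout" using that unfolding Sout_def by blast
    qed
    finally show ?thesis .
  qed
  have ne: "\<rho>1 j \<noteq> x" "\<rho>2 j \<noteq> z" if "j \<in> Y" for j
  proof -
    show "\<rho>1 j \<noteq> x" using False that by blast
    show "\<rho>2 j \<noteq> z" using z(2) that unfolding A_def by blast
  qed
  show ?thesis
  proof (intro bexI[of _ z] z(1))
    show "piso E1 P1 E2 P2 (insert i Y) (\<rho>1(i := x)) (\<rho>2(i := z))"
      unfolding piso_def
    proof (intro ballI)
      fix j j' assume j: "j \<in> insert i Y" and j': "j' \<in> insert i Y"
      show "((\<rho>1(i := x)) j = (\<rho>1(i := x)) j' \<longleftrightarrow> (\<rho>2(i := z)) j = (\<rho>2(i := z)) j') \<and>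
         (E1 ((\<rho>1(i := x)) j) ((\<rho>1(i := x)) j') \<longleftrightarrow> E2 ((\<rho>2(i := z)) j) ((\<rho>2(i := z)) j')) \<and>
         (\<forall>u. P1 u ((\<rho>1(i := x)) j) \<longleftrightarrow> P2 u ((\<rho>2(i := z)) j))"
      proof (cases "j = i"; cases "j' = i")
        assume "j = i" "j' = i" then show ?thesis using nl1 nl2 by (simp add: zu u')
      next
        assume "j = i" "j' \<noteq> i"
        then have "j' \<in> Y" using j' by blast
        then show ?thesis using \<open>j = i\<close> \<open>j' \<noteq> i\<close> ne[of j'] out1[of j'] by (simp add: zu u')
      next
        assume "j \<noteq> i" "j' = i"
        then have "j \<in> Y" using j by blast
        have h: "\<forall>v. P1 v (\<rho>1 j) \<longleftrightarrow> P2 v (\<rho>2 j)"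
          using pi[unfolded piso_def, rule_format, OF \<open>j \<in> Y\<close> \<open>j \<in> Y\<close>] by blast
        have "\<rho>1 j \<noteq> x" "\<rho>2 j \<noteq> z" "E2 (\<rho>2 j) z \<longleftrightarrow> E1 (\<rho>1 j) x"
          using ne[OF \<open>j \<in> Y\<close>] in1[OF \<open>j \<in> Y\<close>] by auto
        then show ?thesis using \<open>j \<noteq> i\<close> \<open>j' = i\<close> h by simp
      next
        assume "j \<noteq> i" "j' \<noteq> i"
        then have "j \<in> Y" "j' \<in> Y" using j j' by blast+
        then have h: "(\<rho>1 j = \<rho>1 j' \<longleftrightarrow> \<rho>2 j = \<rho>2 j') \<and> (E1 (\<rho>1 j) (\<rho>1 j') \<longleftrightarrow> E2 (\<rho>2 j) (\<rho>2 j')) \<and>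
     (\<forall>u. P1 u (\<rho>1 j) \<longleftrightarrow> P2 u (\<rho>2 j))"
          using pi[unfolded piso_def] by blast
        show ?thesis using \<open>j \<noteq> i\<close> \<open>j' \<noteq> i\<close> h by simp
      qed
    qed
  qed
qed

lemma ef:
  assumes T1: "Tk_coloured_digraph k V1 E1 P1" and T2: "Tk_coloured_digraph k V2 E2 P2"
    and ext1: "ext_prop k N V1 E1 P1" and ext2: "ext_prop k N V2 E2 P2"
  shows "finite X \<Longrightarrow> free_vars \<phi> \<subseteq> X \<Longrightarrow> card X + qd \<phi> \<le> N \<Longrightarrow> (\<forall>j. \<rho>1 j \<in> V1) \<Longrightarrow>
    (\<forall>j. \<rho>2 j \<in> V2) \<Longrightarrow> piso E1 P1 E2 P2 X \<rho>1 \<rho>2 \<Longrightarrow>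
    sat V1 E1 P1 \<rho>1 \<phi> \<longleftrightarrow> sat V2 E2 P2 \<rho>2 \<phi>"
proof (induction \<phi> arbitrary: X \<rho>1 \<rho>2)
  case (FEq i j) then show ?case unfolding piso_def by simp
next
  case (FEdge i j) then show ?case unfolding piso_def by simp
next
  case (FCol u i) then show ?case unfolding piso_def by simp
next
  case (FNeg \<phi>) then show ?case by simp
next
  case (FConj \<phi> \<psi>)
  have "sat V1 E1 P1 \<rho>1 \<phi> \<longleftrightarrow> sat V2 E2 P2 \<rho>2 \<phi>" using FConj by (intro FConj.IH(1)) auto
  moreover have "sat V1 E1 P1 \<rho>1 \<psi> \<longleftrightarrow> sat V2 E2 P2 \<rho>2 \<psi>" using FConj by (intro FConj.IH(2)) auto
  ultimately show ?case by simp
next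
  case (FEx i \<phi>)
  define Y where "Y = X - {i}"
  have finY: "finite Y" using FEx.prems(1) unfolding Y_def by blast
  have cY: "card Y \<le> card X" unfolding Y_def using FEx.prems(1) by (simp add: card_mono)
  have cYN: "card Y \<le> N" using cY FEx.prems(3) by simp
  have cins: "card (insert i Y) + qd \<phi> \<le> N"
    using FEx.prems(3) finY cY unfolding Y_def
    by (simp add: card_insert_if)
  have fv: "free_vars \<phi> \<subseteq> insert i Y" using FEx.prems(2) unfolding Y_def by auto
  have pY: "piso E1 P1 E2 P2 Y \<rho>1 \<rho>2" using FEx.prems(6) piso_mono unfolding Y_def by blast
  have iY: "i \<notin> Y" unfolding Y_def by blast
  show ?case
  proof
    assume "sat V1 E1 P1 \<rho>1 (FEx i \<phi>)"
    then obtain x where x: "x \<in> V1" "sat V1 E1 P1 (\<rho>1(i := x)) \<phi>" by auto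
    obtain y where y: "y \<in> V2" "piso E1 P1 E2 P2 (insert i Y) (\<rho>1(i := x)) (\<rho>2(i := y))"
      using forth[OF T1 T2 ext2 finY cYN iY FEx.prems(5) pY x(1)] by blast
    have "sat V1 E1 P1 (\<rho>1(i := x)) \<phi> \<longleftrightarrow> sat V2 E2 P2 (\<rho>2(i := y)) \<phi>"
      apply (rule FEx.IH[of "insert i Y"])
      using finY fv cins FEx.prems(4,5) x(1) y by (auto simp: fun_upd_def)
    then have "sat V2 E2 P2 (\<rho>2(i := y)) \<phi>" using x(2) by simp
    then show "sat V2 E2 P2 \<rho>2 (FEx i \<phi>)" using y(1) by auto
  next
    assume "sat V2 E2 P2 \<rho>2 (FEx i \<phi>)"
    then obtain y where y: "y \<in> V2" "sat V2 E2 P2 (\<rho>2(i := y)) \<phi>" by auto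
    obtain x where x: "x \<in> V1" "piso E2 P2 E1 P1 (insert i Y) (\<rho>2(i := y)) (\<rho>1(i := x))"
      using forth[OF T2 T1 ext1 finY cYN iY FEx.prems(4) piso_sym[OF pY] y(1)] by blast
    have "sat V1 E1 P1 (\<rho>1(i := x)) \<phi> \<longleftrightarrow> sat V2 E2 P2 (\<rho>2(i := y)) \<phi>"
      apply (rule FEx.IH[of "insert i Y"])
      using finY fv cins FEx.prems(4,5) x(1) y(1) piso_sym[OF x(2)] by (auto simp: fun_upd_def)
    then have "sat V1 E1 P1 (\<rho>1(i := x)) \<phi>" using y(2) by simp
    then show "sat V1 E1 P1 \<rho>1 (FEx i \<phi>)" using x(1) by auto
  qed
qed

lemma ext_nonempty:
  assumes "ext_prop k N V E P" "k \<ge> 1" shows "V \<noteq> {}"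
proof -
  have "\<exists>z\<in>V. z \<notin> {} \<and> P 1 z \<and> (\<forall>a\<in>{}. E a z \<longleftrightarrow> a \<in> {}) \<and> (\<forall>a\<in>{}. E z a \<longleftrightarrow> a \<in> {})"
    using assms(1) assms(2) unfolding ext_prop_def by (intro assms(1)[unfolded ext_prop_def, rule_format]) auto
  then show ?thesis by blast
qed

lemma transfer:
  assumes T1: "Tk_coloured_digraph k V1 E1 P1" and T2: "Tk_coloured_digraph k V2 E2 P2"
    and ext1: "ext_prop k N V1 E1 P1" and ext2: "ext_prop k N V2 E2 P2"
    and k: "k \<ge> 1" and fv: "free_vars \<phi> = {}" and q: "qd \<phi> \<le> N"
  shows "models V1 E1 P1 \<phi> \<longleftrightarrow> models V2 E2 P2 \<phi>"
proof -
  obtain a1 where a1: "a1 \<in> V1" using ext_nonempty[OF ext1 k] by blast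
  obtain a2 where a2: "a2 \<in> V2" using ext_nonempty[OF ext2 k] by blast
  have key: "sat V1 E1 P1 \<rho>1 \<phi> \<longleftrightarrow> sat V2 E2 P2 \<rho>2 \<phi>"
    if "\<forall>j. \<rho>1 j \<in> V1" "\<forall>j. \<rho>2 j \<in> V2" for \<rho>1 \<rho>2
    using ef[OF T1 T2 ext1 ext2, of "{}" \<phi> \<rho>1 \<rho>2] that fv q by (simp add: piso_def)
  show ?thesis unfolding models_def
  proof
    assume h: "\<forall>\<rho>. (\<forall>i. \<rho> i \<in> V1) \<longrightarrow> sat V1 E1 P1 \<rho> \<phi>"
    show "\<forall>\<rho>. (\<forall>i. \<rho> i \<in> V2) \<longrightarrow> sat V2 E2 P2 \<rho> \<phi>"
    proof (intro allI impI)
      fix \<rho> :: "nat \<Rightarrow> _" assume r: "\<forall>i. \<rho> i \<in> V2"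
      have "sat V1 E1 P1 (\<lambda>_. a1) \<phi>" by (rule h[rule_format]) (simp add: a1)
      then show "sat V2 E2 P2 \<rho> \<phi>" using key[of "\<lambda>_. a1" \<rho>] a1 r by blast
    qed
  next
    assume h: "\<forall>\<rho>. (\<forall>i. \<rho> i \<in> V2) \<longrightarrow> sat V2 E2 P2 \<rho> \<phi>"
    show "\<forall>\<rho>. (\<forall>i. \<rho> i \<in> V1) \<longrightarrow> sat V1 E1 P1 \<rho> \<phi>"
    proof (intro allI impI)
      fix \<rho> :: "nat \<Rightarrow> _" assume r: "\<forall>i. \<rho> i \<in> V1"
      have "sat V2 E2 P2 (\<lambda>_. a2) \<phi>" by (rule h[rule_format]) (simp add: a2)
      then show "sat V1 E1 P1 \<rho> \<phi>" using key[of \<rho> "\<lambda>_. a2"] a2 r by blast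
    qed
  qed
qed

lemma C_ext:
  assumes C: "is_C_Tk k V E P"
  shows "ext_prop k N V E P"
  unfolding ext_prop_def
proof (intro allI impI, elim conjE)
  fix A Sin Sout u
  assume finA: "finite A" and AV: "A \<subseteq> V" and "card A \<le> N" and uk: "u \<in> {1..k}"
    and SinA: "Sin \<subseteq> A" and SoutA: "Sout \<subseteq> A"
    and cin: "\<forall>a\<in>Sin. \<forall>v. P v a \<longrightarrow> v < u" and cout: "\<forall>a\<in>Sout. \<forall>v. P v a \<longrightarrow> u < v"
  have T: "Tk_coloured_digraph k V E P" and H: "homogeneous V E P"
    and U: "\<And>(W :: nat set) F Q. finite W \<Longrightarrow> Tk_coloured_digraph k W F Q \<Longrightarrow> \<exists>f. embedding f W F Q V E P"
    using C unfolding is_C_Tk_def by auto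
  define m where "m = card A"
  obtain g where g: "bij_betw g {0..<m} A" using ex_bij_betw_nat_finite[OF finA] unfolding m_def by blast
  have gA: "g i \<in> A" if "i < m" for i using g that unfolding bij_betw_def by auto
  have gV: "g i \<in> V" if "i < m" for i using gA AV that by blast
  define W where "W = {0..<Suc m}"
  define F where "F = (\<lambda>i j. (i < m \<and> j < m \<and> E (g i) (g j)) \<or> (i < m \<and> j = m \<and> g i \<in> Sin) \<or>
     (i = m \<and> j < m \<and> g j \<in> Sout))"
  define Q where "Q = (\<lambda>v i. (i < m \<and> P v (g i)) \<or> (i = m \<and> v = u))"
  have TW1: "\<forall>x y. F x y \<longrightarrow> x \<in> W \<and> y \<in> W \<and> x \<noteq> y"
  proof (intro allI impI)
    fix x y assume "F x y"
    then show "x \<in> W \<and> y \<in> W \<and> x \<noteq> y"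
      using T unfolding F_def W_def Tk_coloured_digraph_def by auto
  qed
  have TW2: "\<forall>v x. Q v x \<longrightarrow> v \<in> {1..k} \<and> x \<in> W"
  proof (intro allI impI)
    fix v x assume "Q v x"
    then show "v \<in> {1..k} \<and> x \<in> W"
      using T uk gV unfolding Q_def W_def Tk_coloured_digraph_def by auto
  qed
  have TW3: "\<forall>x\<in>W. \<exists>!v. Q v x"
  proof
    fix x assume "x \<in> W"
    show "\<exists>!v. Q v x"
    proof (cases "x < m")
      case True
      then have "g x \<in> V" by (rule gV)
      then have "\<exists>!v. P v (g x)" using T unfolding Tk_coloured_digraph_def by blast
      then show ?thesis using True unfolding Q_def by simp
    next
      case False
      then have "x = m" using \<open>x \<in> W\<close> unfolding W_def by simp
      then show ?thesis unfolding Q_def by simp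
    qed
  qed
  have TW4: "\<forall>x y v w. F x y \<longrightarrow> Q v x \<longrightarrow> Q w y \<longrightarrow> v < w"
  proof (intro allI impI)
    fix x y v w assume "F x y" "Q v x" "Q w y"
    then show "v < w"
      using T cin cout unfolding F_def Q_def Tk_coloured_digraph_def by auto
  qed
  have TW: "Tk_coloured_digraph k W F Q"
    unfolding Tk_coloured_digraph_def using TW1 TW2 TW3 TW4 by blast
  obtain f where f: "embedding f W F Q V E P" using U[OF _ TW] unfolding W_def by auto
  have finj: "inj_on f W" and fV: "f ` W \<subseteq> V"
    and fE: "\<And>x y. x \<in> W \<Longrightarrow> y \<in> W \<Longrightarrow> E (f x) (f y) \<longleftrightarrow> F x y"
    and fP: "\<And>v x. x \<in> W \<Longrightarrow> P v (f x) \<longleftrightarrow> Q v x"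
    using f unfolding embedding_def by auto
  define B where "B = f ` {0..<m}"
  have sub: "{0..<m} \<subseteq> W" unfolding W_def by auto
  have fbij: "bij_betw f {0..<m} B" unfolding B_def
    using inj_on_subset[OF finj sub] by (simp add: bij_betw_def)
  define h0 where "h0 = g \<circ> inv_into {0..<m} f"
  have h0f: "h0 (f i) = g i" if "i < m" for i
    unfolding h0_def using bij_betw_inv_into_left[OF fbij] that by simp
  have h0bij: "bij_betw h0 B A" unfolding h0_def
    using bij_betw_trans[OF bij_betw_inv_into[OF fbij] g] .
  have BV: "B \<subseteq> V" using fV sub unfolding B_def by blast
  have "\<exists>h. bij_betw h V V \<and> embedding h V E P V E P \<and> (\<forall>x\<in>B. h x = h0 x)"
  proof (rule H[unfolded homogeneous_def, rule_format], intro conjI)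
    show "finite B" unfolding B_def by simp
    show "B \<subseteq> V" by (rule BV)
    show "A \<subseteq> V" by (rule AV)
    show "bij_betw h0 B A" by (rule h0bij)
    show "\<forall>x\<in>B. \<forall>y\<in>B. E (h0 x) (h0 y) \<longleftrightarrow> E x y"
    proof (intro ballI)
      fix x y assume "x \<in> B" "y \<in> B"
      then obtain i j where "i < m" "j < m" "x = f i" "y = f j" unfolding B_def by auto
      then show "E (h0 x) (h0 y) \<longleftrightarrow> E x y"
        using h0f fE[of i j] unfolding W_def F_def by simp
    qed
    show "\<forall>v. \<forall>x\<in>B. P v (h0 x) \<longleftrightarrow> P v x"
    proof (intro allI ballI)
      fix v x assume "x \<in> B"
      then obtain i where "i < m" "x = f i" unfolding B_def by auto
      then show "P v (h0 x) \<longleftrightarrow> P v x"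
        using h0f fP[of i v] unfolding W_def Q_def by simp
    qed
  qed
  then obtain h where hbij: "bij_betw h V V" and hemb: "embedding h V E P V E P"
    and hB: "\<forall>x\<in>B. h x = h0 x" by blast
  have hinj: "inj_on h V" and hV: "h ` V \<subseteq> V"
    and hE: "\<And>x y. x \<in> V \<Longrightarrow> y \<in> V \<Longrightarrow> E (h x) (h y) \<longleftrightarrow> E x y"
    and hP: "\<And>v x. x \<in> V \<Longrightarrow> P v (h x) \<longleftrightarrow> P v x"
    using hemb unfolding embedding_def by auto
  have mW: "m \<in> W" unfolding W_def by simp
  have fmV: "f m \<in> V" using fV mW by blast
  have fiV: "f i \<in> V" if "i < m" for i using fV sub that unfolding W_def by auto
  have hfi: "h (f i) = g i" if "i < m" for i using hB h0f that unfolding B_def by auto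
  show "\<exists>z\<in>V. z \<notin> A \<and> P u z \<and> (\<forall>a\<in>A. E a z \<longleftrightarrow> a \<in> Sin) \<and> (\<forall>a\<in>A. E z a \<longleftrightarrow> a \<in> Sout)"
  proof (intro bexI[of _ "h (f m)"] conjI ballI)
    show "h (f m) \<in> V" using hV fmV by blast
    show "h (f m) \<notin> A"
    proof
      assume "h (f m) \<in> A"
      then obtain i where i: "i < m" "g i = h (f m)" using g unfolding bij_betw_def by auto
      then have "h (f i) = h (f m)" using hfi by simp
      then have "f i = f m" using hinj fiV[OF i(1)] fmV unfolding inj_on_def by blast
      then have "i = m" using finj i(1) mW unfolding inj_on_def W_def by simp
      then show False using i(1) by simp
    qed
    show "P u (h (f m))" using hP[OF fmV] fP[OF mW] unfolding Q_def by simp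
  next
    fix a assume "a \<in> A"
    then obtain i where i: "i < m" "a = g i" using g unfolding bij_betw_def by auto
    have "E a (h (f m)) \<longleftrightarrow> E (f i) (f m)" using hE[OF fiV[OF i(1)] fmV] hfi[OF i(1)] i(2) by simp
    also have "\<dots> \<longleftrightarrow> F i m" using fE[OF _ mW, of i] i(1) unfolding W_def by simp
    also have "\<dots> \<longleftrightarrow> a \<in> Sin" using i unfolding F_def by simp
    finally show "E a (h (f m)) \<longleftrightarrow> a \<in> Sin" .
  next
    fix a assume "a \<in> A"
    then obtain i where i: "i < m" "a = g i" using g unfolding bij_betw_def by auto
    have "E (h (f m)) a \<longleftrightarrow> E (f m) (f i)" using hE[OF fmV fiV[OF i(1)]] hfi[OF i(1)] i(2) by simp
    also have "\<dots> \<longleftrightarrow> F m i" using fE[OF mW, of i] i(1) unfolding W_def by simp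
    also have "\<dots> \<longleftrightarrow> a \<in> Sout" using i unfolding F_def by simp
    finally show "E (h (f m)) a \<longleftrightarrow> a \<in> Sout" .
  qed
qed

lemma card_fix_block:
  assumes U: "finite U" and BU: "B \<subseteq> U" and TB: "T \<subseteq> B" and Q: "\<And>F. Q F = Q (F - B)"
  shows "card {F. F \<subseteq> U \<and> Q F} = 2 ^ card B * card {F. F \<subseteq> U \<and> Q F \<and> F \<inter> B = T}"
proof -
  define G where "G = {H. H \<subseteq> U - B \<and> Q H}"
  have finB: "finite B" using U BU finite_subset by blast
  have finG: "finite G" unfolding G_def using U by simp
  have b1: "bij_betw (\<lambda>F. (F - B, F \<inter> B)) {F. F \<subseteq> U \<and> Q F} (G \<times> Pow B)"
  proof (rule bij_betw_byWitness[where f' = "\<lambda>(H, S). H \<union> S"])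
    show "\<forall>a\<in>{F. F \<subseteq> U \<and> Q F}. (case (a - B, a \<inter> B) of (H, S) \<Rightarrow> H \<union> S) = a" by auto
    show "\<forall>a'\<in>G \<times> Pow B. (\<lambda>F. (F - B, F \<inter> B)) (case a' of (H, S) \<Rightarrow> H \<union> S) = a'"
      unfolding G_def by auto
    show "(\<lambda>F. (F - B, F \<inter> B)) ` {F. F \<subseteq> U \<and> Q F} \<subseteq> G \<times> Pow B"
      unfolding G_def using Q by auto
    show "(\<lambda>(H, S). H \<union> S) ` (G \<times> Pow B) \<subseteq> {F. F \<subseteq> U \<and> Q F}"
    proof
      fix F assume "F \<in> (\<lambda>(H, S). H \<union> S) ` (G \<times> Pow B)"
      then obtain H S where "H \<in> G" "S \<subseteq> B" "F = H \<union> S" by auto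
      moreover have "(H \<union> S) - B = H" using \<open>H \<in> G\<close> \<open>S \<subseteq> B\<close> unfolding G_def by auto
      ultimately show "F \<in> {F. F \<subseteq> U \<and> Q F}" using Q[of F] BU unfolding G_def by auto
    qed
  qed
  have b2: "bij_betw (\<lambda>F. F - B) {F. F \<subseteq> U \<and> Q F \<and> F \<inter> B = T} G"
  proof (rule bij_betw_byWitness[where f' = "\<lambda>H. H \<union> T"])
    show "\<forall>a\<in>{F. F \<subseteq> U \<and> Q F \<and> F \<inter> B = T}. a - B \<union> T = a" by auto
    show "\<forall>a'\<in>G. a' \<union> T - B = a'" unfolding G_def using TB by auto
    show "(\<lambda>F. F - B) ` {F. F \<subseteq> U \<and> Q F \<and> F \<inter> B = T} \<subseteq> G"
      unfolding G_def using Q by auto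
    show "(\<lambda>H. H \<union> T) ` G \<subseteq> {F. F \<subseteq> U \<and> Q F \<and> F \<inter> B = T}"
    proof
      fix F assume "F \<in> (\<lambda>H. H \<union> T) ` G"
      then obtain H where H: "H \<in> G" "F = H \<union> T" by auto
      moreover have "(H \<union> T) - B = H" using H(1) TB unfolding G_def by auto
      moreover have "(H \<union> T) \<inter> B = T" using H(1) TB unfolding G_def by auto
      ultimately show "F \<in> {F. F \<subseteq> U \<and> Q F \<and> F \<inter> B = T}" using Q[of F] BU TB unfolding G_def by auto
    qed
  qed
  have "card {F. F \<subseteq> U \<and> Q F} = card G * 2 ^ card B"
    using bij_betw_same_card[OF b1] finG finB by (simp add: card_cartesian_product card_Pow)
  moreover have "card {F. F \<subseteq> U \<and> Q F \<and> F \<inter> B = T} = card G"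
    using bij_betw_same_card[OF b2] .
  ultimately show ?thesis by simp
qed

lemma avoid_count:
  assumes U: "finite U" and Z: "finite Z"
  shows "(\<forall>z\<in>Z. B z \<subseteq> U \<and> T z \<subseteq> B z \<and> card (B z) \<le> M) \<Longrightarrow>
    (\<forall>z\<in>Z. \<forall>z'\<in>Z. z \<noteq> z' \<longrightarrow> B z \<inter> B z' = {}) \<Longrightarrow>
    real (card {F. F \<subseteq> U \<and> (\<forall>z\<in>Z. F \<inter> B z \<noteq> T z)}) \<le> 2 ^ card U * (1 - 1 / 2 ^ M) ^ card Z"
  using Z
proof (induction Z rule: finite_induct)
  case empty
  have "{F. F \<subseteq> U \<and> (\<forall>z\<in>{}. F \<inter> B z \<noteq> T z)} = Pow U" by auto
  then show ?case using U by (simp add: card_Pow)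
next
  case (insert z Z)
  define Q where "Q = (\<lambda>F. \<forall>z'\<in>Z. F \<inter> B z' \<noteq> T z')"
  have Qeq: "Q F = Q (F - B z)" for F
  proof -
    have "(F - B z) \<inter> B z' = F \<inter> B z'" if "z' \<in> Z" for z'
      using insert.prems(2) insert.hyps(2) that by fastforce
    then show ?thesis unfolding Q_def by simp
  qed
  have Bz: "B z \<subseteq> U" "T z \<subseteq> B z" "card (B z) \<le> M" using insert.prems(1) by auto
  have fb: "card {F. F \<subseteq> U \<and> Q F} = 2 ^ card (B z) * card {F. F \<subseteq> U \<and> Q F \<and> F \<inter> B z = T z}"
    by (rule card_fix_block[where Q=Q, OF U Bz(1) Bz(2) Qeq])
  have seteq: "{F. F \<subseteq> U \<and> (\<forall>z\<in>insert z Z. F \<inter> B z \<noteq> T z)} =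
     {F. F \<subseteq> U \<and> Q F} - {F. F \<subseteq> U \<and> Q F \<and> F \<inter> B z = T z}"
    unfolding Q_def by auto
  have fin1: "finite {F. F \<subseteq> U \<and> Q F}" using U by simp
  have sub: "{F. F \<subseteq> U \<and> Q F \<and> F \<inter> B z = T z} \<subseteq> {F. F \<subseteq> U \<and> Q F}" by auto
  have IH: "real (card {F. F \<subseteq> U \<and> Q F}) \<le> 2 ^ card U * (1 - 1 / 2 ^ M) ^ card Z"
    using insert.IH insert.prems unfolding Q_def by auto
  define a where "a = real (card {F. F \<subseteq> U \<and> Q F})"
  define b where "b = real (card {F. F \<subseteq> U \<and> Q F \<and> F \<inter> B z = T z})"
  have ab: "a = 2 ^ card (B z) * b" unfolding a_def b_def using fb by (simp flip: of_nat_power)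
  have "real (card {F. F \<subseteq> U \<and> (\<forall>z\<in>insert z Z. F \<inter> B z \<noteq> T z)}) = a - b"
    unfolding seteq a_def b_def using card_Diff_subset[OF finite_subset[OF sub fin1] sub] card_mono[OF fin1 sub]
    by (simp add: of_nat_diff)
  also have "\<dots> = a * (1 - 1 / 2 ^ card (B z))" using ab by (simp add: field_simps)
  also have "\<dots> \<le> a * (1 - 1 / 2 ^ M)"
  proof (rule mult_left_mono)
    show "1 - 1 / 2 ^ card (B z) \<le> 1 - 1 / (2::real) ^ M"
      using Bz(3) by (simp add: power_increasing frac_le)
    show "0 \<le> a" unfolding a_def by simp
  qed
  also have "\<dots> \<le> 2 ^ card U * (1 - 1 / 2 ^ M) ^ card Z * (1 - 1 / 2 ^ M)"
    by (rule mult_right_mono) (use IH in \<open>auto simp: a_def\<close>)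
  also have "\<dots> = 2 ^ card U * (1 - 1 / 2 ^ M) ^ card (insert z Z)"
    using insert.hyps by simp
  finally show ?case .
qed

lemma card_small_subsets:
  "card {A. A \<subseteq> {1..n::nat} \<and> card A \<le> N} \<le> (n + 1) ^ N"
proof -
  define L where "L = {xs. set xs \<subseteq> {0..n} \<and> length xs = N}"
  have "{A. A \<subseteq> {1..n::nat} \<and> card A \<le> N} \<subseteq> (\<lambda>xs. set xs - {0}) ` L"
  proof
    fix A assume A: "A \<in> {A. A \<subseteq> {1..n::nat} \<and> card A \<le> N}"
    have finA: "finite A" using A finite_subset by blast
    define xs where "xs = sorted_list_of_set A @ replicate (N - card A) 0"
    have "set xs - {0} = A" unfolding xs_def using finA A by auto
    moreover have "xs \<in> L" unfolding xs_def L_def using finA A by auto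
    ultimately show "A \<in> (\<lambda>xs. set xs - {0}) ` L" by blast
  qed
  then have "card {A. A \<subseteq> {1..n::nat} \<and> card A \<le> N} \<le> card ((\<lambda>xs. set xs - {0}) ` L)"
    by (rule card_mono[rotated]) (simp add: L_def finite_lists_length_eq)
  also have "\<dots> \<le> card L" by (rule card_image_le) (simp add: L_def finite_lists_length_eq)
  also have "card L = (n + 1) ^ N" unfolding L_def by (simp add: card_lists_length_eq)
  finally show ?thesis .
qed

definition cols :: "nat \<Rightarrow> nat \<Rightarrow> (nat \<Rightarrow> nat) set" where
  "cols k n = {1..n} \<rightarrow>\<^sub>E {1..k}"
definition Pc :: "nat \<Rightarrow> (nat \<Rightarrow> nat) \<Rightarrow> nat \<Rightarrow> nat \<Rightarrow> bool" where
  "Pc n c = (\<lambda>u x. x \<in> {1..n} \<and> c x = u)"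
definition Al :: "nat \<Rightarrow> (nat \<Rightarrow> nat) \<Rightarrow> (nat \<times> nat) set" where
  "Al n c = {(x, y). x \<in> {1..n} \<and> y \<in> {1..n} \<and> c x < c y}"
definition eo :: "(nat \<times> nat) set \<Rightarrow> nat \<Rightarrow> nat \<Rightarrow> bool" where
  "eo F = (\<lambda>x y. (x, y) \<in> F)"
definition cls :: "nat \<Rightarrow> (nat \<Rightarrow> nat) \<Rightarrow> nat \<Rightarrow> nat set" where
  "cls n c u = {x \<in> {1..n}. c x = u}"

lemma finite_Al[simp]: "finite (Al n c)"
proof -
  have "Al n c \<subseteq> {1..n} \<times> {1..n}" unfolding Al_def by auto
  then show ?thesis using finite_subset by blast
qed

lemma finite_cols[simp]: "finite (cols k n)"
  unfolding cols_def by (simp add: finite_PiE)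

lemma card_cols: "card (cols k n) = k ^ n"
  unfolding cols_def by (simp add: card_PiE)

lemma Tk_struct:
  assumes "c \<in> cols k n" "F \<subseteq> Al n c"
  shows "Tk_coloured_digraph k {1..n} (eo F) (Pc n c)"
proof -
  have c: "\<And>x. x \<in> {1..n} \<Longrightarrow> c x \<in> {1..k}" using assms(1) unfolding cols_def by auto
  have F: "\<And>x y. (x, y) \<in> F \<Longrightarrow> x \<in> {1..n} \<and> y \<in> {1..n} \<and> c x < c y"
    using assms(2) unfolding Al_def by auto
  have 1: "\<forall>x y. eo F x y \<longrightarrow> x \<in> {1..n} \<and> y \<in> {1..n} \<and> x \<noteq> y"
    unfolding eo_def using F by fastforce
  have 2: "\<forall>u x. Pc n c u x \<longrightarrow> u \<in> {1..k} \<and> x \<in> {1..n}"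
    unfolding Pc_def using c by blast
  have 3: "\<forall>x\<in>{1..n}. \<exists>!u. Pc n c u x" unfolding Pc_def by simp
  have 4: "\<forall>x y u v. eo F x y \<longrightarrow> Pc n c u x \<longrightarrow> Pc n c v y \<longrightarrow> u < v"
    unfolding Pc_def eo_def using F by blast
  show ?thesis unfolding Tk_coloured_digraph_def using 1 2 3 4 by blast
qed

lemma struct_inj: "inj_on (\<lambda>(c, F). (eo F, Pc n c)) (SIGMA c:cols k n. Pow (Al n c))"
proof (rule inj_onI, clarsimp)
  fix c F c' F'
  assume c: "c \<in> cols k n" "c' \<in> cols k n" and e: "eo F = eo F'" and p: "Pc n c = Pc n c'"
  have "F = F'"
  proof (rule set_eqI)
    fix p :: "nat \<times> nat"
    show "p \<in> F \<longleftrightarrow> p \<in> F'" using fun_cong[OF fun_cong[OF e, of "fst p"], of "snd p"]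
      unfolding eo_def by simp
  qed
  moreover have "c = c'"
  proof (rule ext)
    fix x
    show "c x = c' x"
    proof (cases "x \<in> {1..n}")
      case True
      have "Pc n c (c x) x" using True unfolding Pc_def by simp
      then have "Pc n c' (c x) x" using p by simp
      then show ?thesis unfolding Pc_def by simp
    next
      case False
      then show ?thesis using c unfolding cols_def PiE_def extensional_def by auto
    qed
  qed
  ultimately show "c = c' \<and> F = F'" by simp
qed

lemma struct_onto:
  assumes "Tk_coloured_digraph k {1..n} E P"
  shows "(E, P) \<in> (\<lambda>(c, F). (eo F, Pc n c)) ` (SIGMA c:cols k n. Pow (Al n c))"
proof -
  have T1: "\<And>x y. E x y \<Longrightarrow> x \<in> {1..n} \<and> y \<in> {1..n} \<and> x \<noteq> y"
    and T2: "\<And>u x. P u x \<Longrightarrow> u \<in> {1..k} \<and> x \<in> {1..n}"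
    and T3: "\<And>x. x \<in> {1..n} \<Longrightarrow> \<exists>!u. P u x"
    and T4: "\<And>x y u v. E x y \<Longrightarrow> P u x \<Longrightarrow> P v y \<Longrightarrow> u < v"
    using assms unfolding Tk_coloured_digraph_def by blast+
  define c where "c = (\<lambda>x. if x \<in> {1..n} then (THE u. P u x) else undefined)"
  have Pc: "P u x \<longleftrightarrow> x \<in> {1..n} \<and> c x = u" for u x
  proof
    assume "P u x"
    then have x: "x \<in> {1..n}" using T2 by blast
    then have "(THE u. P u x) = u" using T3[OF x] \<open>P u x\<close> by (metis the_equality)
    then show "x \<in> {1..n} \<and> c x = u" using x unfolding c_def by simp
  next
    assume h: "x \<in> {1..n} \<and> c x = u"
    then have "P (THE u. P u x) x" using T3 by (metis theI')
    moreover have "c x = (THE u. P u x)" using h unfolding c_def by simp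
    ultimately show "P u x" using h by simp
  qed
  have PP: "P = Pc n c" unfolding Pc_def using Pc by (intro ext) blast
  have cc: "c \<in> cols k n"
    unfolding cols_def
  proof (rule PiE_I)
    fix x assume x: "x \<in> {1..n}"
    then have "P (c x) x" using Pc by blast
    then show "c x \<in> {1..k}" using T2 by blast
  next
    fix x assume "x \<notin> {1..n}" then show "c x = undefined" unfolding c_def by auto
  qed
  define F where "F = {(x, y). E x y}"
  have FA: "F \<subseteq> Al n c"
  proof
    fix p assume "p \<in> F"
    then obtain x y where p: "p = (x, y)" "E x y" unfolding F_def by auto
    then have xy: "x \<in> {1..n}" "y \<in> {1..n}" using T1 by auto
    have "P (c x) x" "P (c y) y" using xy Pc by auto
    then have "c x < c y" using T4 p(2) by blast
    then show "p \<in> Al n c" using p xy unfolding Al_def by simp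
  qed
  have EE: "E = eo F" unfolding eo_def F_def by simp
  show ?thesis
  proof (rule image_eqI[of _ _ "(c, F)"])
    show "(E, P) = (case (c, F) of (c, F) \<Rightarrow> (eo F, Pc n c))" using EE PP by simp
    show "(c, F) \<in> (SIGMA c:cols k n. Pow (Al n c))" using cc FA by simp
  qed
qed

lemma card_structs:
  "card {(E, P). Tk_coloured_digraph k {1..n} E P \<and> R E P} =
   (\<Sum>c\<in>cols k n. card {F. F \<subseteq> Al n c \<and> R (eo F) (Pc n c)})"
proof -
  define S where "S = (SIGMA c:cols k n. {F. F \<subseteq> Al n c \<and> R (eo F) (Pc n c)})"
  have "{(E, P). Tk_coloured_digraph k {1..n} E P \<and> R E P} = (\<lambda>(c, F). (eo F, Pc n c)) ` S"
  proof
    show "{(E, P). Tk_coloured_digraph k {1..n} E P \<and> R E P} \<subseteq> (\<lambda>(c, F). (eo F, Pc n c)) ` S"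
    proof (clarify)
      fix E P assume "Tk_coloured_digraph k {1..n} E P" "R E P"
      then obtain p where p: "p \<in> (SIGMA c:cols k n. Pow (Al n c))" "(E, P) = (\<lambda>(c, F). (eo F, Pc n c)) p"
        using struct_onto by blast
      obtain c F where "p = (c, F)" by (cases p)
      then have "c \<in> cols k n" "F \<subseteq> Al n c" "E = eo F" "P = Pc n c" using p by auto
      then show "(E, P) \<in> (\<lambda>(c, F). (eo F, Pc n c)) ` S"
        using \<open>R E P\<close> by (intro image_eqI[of _ _ "(c, F)"]) (auto simp: S_def)
    qed
    show "(\<lambda>(c, F). (eo F, Pc n c)) ` S \<subseteq> {(E, P). Tk_coloured_digraph k {1..n} E P \<and> R E P}"
    proof
      fix q assume "q \<in> (\<lambda>(c, F). (eo F, Pc n c)) ` S"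
      then obtain c F where cF: "(c, F) \<in> S" "q = (eo F, Pc n c)" by auto
      then have "c \<in> cols k n" "F \<subseteq> Al n c" "R (eo F) (Pc n c)" unfolding S_def by auto
      then show "q \<in> {(E, P). Tk_coloured_digraph k {1..n} E P \<and> R E P}"
        using Tk_struct cF(2) by simp
    qed
  qed
  moreover have "inj_on (\<lambda>(c, F). (eo F, Pc n c)) S"
    using struct_inj by (rule inj_on_subset) (auto simp: S_def)
  ultimately have "card {(E, P). Tk_coloured_digraph k {1..n} E P \<and> R E P} = card S"
    by (simp add: card_image)
  also have "\<dots> = (\<Sum>c\<in>cols k n. card {F. F \<subseteq> Al n c \<and> R (eo F) (Pc n c)})"
    unfolding S_def by (rule card_SigmaI) auto
  finally show ?thesis .
qed

lemma card_all_structs: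
  "card {(E, P). Tk_coloured_digraph k {1..n} E P} = (\<Sum>c\<in>cols k n. 2 ^ card (Al n c))"
  using card_structs[of k n "\<lambda>_ _. True"] by (simp add: card_Pow flip: Pow_def)

lemma cls_finite[simp]: "finite (cls n c u)" unfolding cls_def by simp

lemma cls_union:
  assumes "c \<in> cols k n"
  shows "(\<Union>u\<in>{1..k}. cls n c u) = {1..n}"
  using assms unfolding cls_def cols_def by auto

lemma cls_sum:
  assumes "c \<in> cols k n"
  shows "(\<Sum>u\<in>{1..k}. card (cls n c u)) = n"
proof -
  have "card (\<Union>u\<in>{1..k}. cls n c u) = (\<Sum>u\<in>{1..k}. card (cls n c u))"
    by (rule card_UN_disjoint) (auto simp: cls_def)
  then show ?thesis using cls_union[OF assms] by simp
qed

lemma Al_identity: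
  assumes c: "c \<in> cols k n"
  shows "2 * card (Al n c) + (\<Sum>u\<in>{1..k}. card (cls n c u) ^ 2) = n ^ 2"
proof -
  define D where "D = (\<Union>u\<in>{1..k}. cls n c u \<times> cls n c u)"
  have cD: "card D = (\<Sum>u\<in>{1..k}. card (cls n c u) ^ 2)"
  proof -
    have "card D = (\<Sum>u\<in>{1..k}. card (cls n c u \<times> cls n c u))"
      unfolding D_def by (rule card_UN_disjoint) (auto simp: cls_def)
    then show ?thesis by (simp add: card_cartesian_product power2_eq_square)
  qed
  have cS: "card (prod.swap ` Al n c) = card (Al n c)"
    by (rule card_image) (auto simp: inj_on_def)
  have cd: "c x \<in> {1..k}" if "x \<in> {1..n}" for x using c that unfolding cols_def by auto
  have eq: "{1..n} \<times> {1..n} = (Al n c \<union> prod.swap ` Al n c) \<union> D"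
  proof
    show "{1..n} \<times> {1..n} \<subseteq> Al n c \<union> prod.swap ` Al n c \<union> D"
    proof
      fix p assume "p \<in> {1..n} \<times> {1..n}"
      then obtain x y where p: "p = (x, y)" and xy: "x \<in> {1..n}" "y \<in> {1..n}" by blast
      consider "c x < c y" | "c y < c x" | "c x = c y" by linarith
      then show "p \<in> Al n c \<union> prod.swap ` Al n c \<union> D"
      proof cases
        case 1
        then have "(x, y) \<in> Al n c" using xy unfolding Al_def by auto
        then show ?thesis using p by blast
      next
        case 2
        then have "(y, x) \<in> Al n c" using xy unfolding Al_def by auto
        then have "(x, y) \<in> prod.swap ` Al n c" by force
        then show ?thesis using p by blast
      next
        case 3
        then have "(x, y) \<in> cls n c (c x) \<times> cls n c (c x)" using xy unfolding cls_def by auto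
        then show ?thesis unfolding D_def using cd[OF xy(1)] p by blast
      qed
    qed
    show "Al n c \<union> prod.swap ` Al n c \<union> D \<subseteq> {1..n} \<times> {1..n}"
      unfolding Al_def D_def cls_def by auto
  qed
  have d1: "Al n c \<inter> prod.swap ` Al n c = {}" unfolding Al_def by auto
  have d2: "(Al n c \<union> prod.swap ` Al n c) \<inter> D = {}" unfolding Al_def D_def cls_def by auto
  have finD: "finite D" unfolding D_def by simp
  have "n ^ 2 = card ({1..n} \<times> {1..n})" by (simp add: card_cartesian_product power2_eq_square)
  also have "\<dots> = card (Al n c \<union> prod.swap ` Al n c) + card D"
    unfolding eq by (rule card_Un_disjoint) (use d2 finD in auto)
  also have "card (Al n c \<union> prod.swap ` Al n c) = card (Al n c) + card (prod.swap ` Al n c)"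
    by (rule card_Un_disjoint) (use d1 in auto)
  finally show ?thesis using cS cD by simp
qed

lemma Al_real:
  assumes c: "c \<in> cols k n"
  shows "2 * real (card (Al n c)) = real n ^ 2 - (\<Sum>u\<in>{1..k}. real (card (cls n c u)) ^ 2)"
proof -
  have "real (2 * card (Al n c) + (\<Sum>u\<in>{1..k}. card (cls n c u) ^ 2)) = real (n ^ 2)"
    using Al_identity[OF c] by simp
  then show ?thesis by (simp add: of_nat_sum)
qed

lemma bad_sq:
  assumes c: "c \<in> cols k n" and k: "k \<ge> 1" and u0: "u0 \<in> {1..k}"
    and small: "real (card (cls n c u0)) < real n / (2 * real k)"
  shows "(\<Sum>u\<in>{1..k}. real (card (cls n c u)) ^ 2) \<ge> real n ^ 2 / real k + real n ^ 2 / (4 * real k ^ 2)"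
proof -
  define s where "s = (\<lambda>u. real (card (cls n c u)))"
  define a where "a = real n / real k"
  have kpos: "real k > 0" using k by simp
  have sums: "(\<Sum>u\<in>{1..k}. s u) = real n" unfolding s_def using cls_sum[OF c]
    by (metis of_nat_sum)
  have "(\<Sum>u\<in>{1..k}. (s u - a) ^ 2) = (\<Sum>u\<in>{1..k}. s u ^ 2 - 2 * a * s u + a ^ 2)"
    by (rule sum.cong) (auto simp: power2_diff algebra_simps)
  also have "\<dots> = (\<Sum>u\<in>{1..k}. s u ^ 2) - 2 * a * (\<Sum>u\<in>{1..k}. s u) + real k * a ^ 2"
    by (simp add: sum.distrib sum_subtractf sum_distrib_left)
  also have "\<dots> = (\<Sum>u\<in>{1..k}. s u ^ 2) - real n ^ 2 / real k"
    unfolding sums a_def using kpos by (simp add: field_simps power2_eq_square)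
  finally have id: "(\<Sum>u\<in>{1..k}. (s u - a) ^ 2) = (\<Sum>u\<in>{1..k}. s u ^ 2) - real n ^ 2 / real k" .
  have "(s u0 - a) ^ 2 \<le> (\<Sum>u\<in>{1..k}. (s u - a) ^ 2)"
    by (rule member_le_sum) (use u0 in auto)
  moreover have "(real n / (2 * real k)) ^ 2 \<le> (s u0 - a) ^ 2"
  proof -
    have "real n / (2 * real k) \<le> a - s u0" using small kpos unfolding s_def a_def by (simp add: field_simps)
    moreover have "0 \<le> real n / (2 * real k)" by simp
    ultimately have "(real n / (2 * real k)) ^ 2 \<le> (a - s u0) ^ 2" by (rule power_mono)
    then show ?thesis by (simp add: power2_commute)
  qed
  moreover have "(real n / (2 * real k)) ^ 2 = real n ^ 2 / (4 * real k ^ 2)"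
    by (simp add: power_divide power_mult_distrib)
  ultimately show ?thesis using id unfolding s_def by linarith
qed

definition c0 :: "nat \<Rightarrow> nat \<Rightarrow> nat \<Rightarrow> nat" where
  "c0 k n = (\<lambda>x\<in>{1..n}. x mod k + 1)"

lemma c0_cols: "k \<ge> 1 \<Longrightarrow> c0 k n \<in> cols k n"
  unfolding c0_def cols_def by (auto simp: Suc_le_eq)

lemma c0_cls: "k \<ge> 1 \<Longrightarrow> card (cls n (c0 k n) u) \<le> n div k + 1"
proof -
  assume k: "k \<ge> 1"
  have "cls n (c0 k n) u \<subseteq> (\<lambda>j. j * k + (u - 1)) ` {0..n div k}"
  proof
    fix x assume "x \<in> cls n (c0 k n) u"
    then have x: "x \<in> {1..n}" "x mod k + 1 = u" unfolding cls_def c0_def by auto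
    have "x = x div k * k + (u - 1)" using x(2) by (metis add_diff_cancel_right' div_mult_mod_eq)
    moreover have "x div k \<le> n div k" using x(1) by (simp add: div_le_mono)
    ultimately show "x \<in> (\<lambda>j. j * k + (u - 1)) ` {0..n div k}" by force
  qed
  then have "card (cls n (c0 k n) u) \<le> card ((\<lambda>j. j * k + (u - 1)) ` {0..n div k})"
    by (rule card_mono[rotated]) simp
  also have "\<dots> \<le> card {0..n div k}" by (rule card_image_le) simp
  finally show ?thesis by simp
qed

lemma c0_sq:
  assumes k: "k \<ge> 1"
  shows "(\<Sum>u\<in>{1..k}. real (card (cls n (c0 k n) u)) ^ 2) \<le> real n ^ 2 / real k + real n"
proof -
  have b: "real (card (cls n (c0 k n) u)) \<le> real n / real k + 1" for u
  proof -
    have "real (card (cls n (c0 k n) u)) \<le> real (n div k) + 1" using c0_cls[OF k, of n u] by linarith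
    also have "real (n div k) \<le> real n / real k" by (rule of_nat_div_le_of_nat)
    finally show ?thesis by simp
  qed
  have "(\<Sum>u\<in>{1..k}. real (card (cls n (c0 k n) u)) ^ 2) \<le>
        (\<Sum>u\<in>{1..k}. real (card (cls n (c0 k n) u)) * (real n / real k + 1))"
    by (rule sum_mono) (simp add: power2_eq_square b mult_left_mono)
  also have "\<dots> = (\<Sum>u\<in>{1..k}. real (card (cls n (c0 k n) u))) * (real n / real k + 1)"
    by (simp add: sum_distrib_right)
  also have "(\<Sum>u\<in>{1..k}. real (card (cls n (c0 k n) u))) = real n"
    using cls_sum[OF c0_cols[OF k]] by (metis of_nat_sum)
  finally show ?thesis by (simp add: field_simps power2_eq_square)
qed

lemma bad_gap:
  assumes c: "c \<in> cols k n" and k: "k \<ge> 1" and u0: "u0 \<in> {1..k}"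
    and small: "real (card (cls n c u0)) < real n / (2 * real k)"
  shows "2 * real (card (Al n c)) \<le> 2 * real (card (Al n (c0 k n))) + real n - real n ^ 2 / (4 * real k ^ 2)"
  using Al_real[OF c] Al_real[OF c0_cols[OF k, of n]] bad_sq[OF c k u0 small] c0_sq[OF k, of n]
  by linarith

definition SS :: "nat \<Rightarrow> nat \<Rightarrow> nat set set" where
  "SS n N = {A. A \<subseteq> {1..n} \<and> card A \<le> N}"
definition Par :: "nat \<Rightarrow> nat \<Rightarrow> nat \<Rightarrow> (nat set \<times> nat \<times> nat set \<times> nat set) set" where
  "Par k n N = SS n N \<times> {1..k} \<times> SS n N \<times> SS n N"
definition qq :: "nat \<Rightarrow> real" where
  "qq N = 1 - 1 / 2 ^ (2 * N + 1)"

lemma finite_SS[simp]: "finite (SS n N)" unfolding SS_def by simp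
lemma finite_Par[simp]: "finite (Par k n N)" unfolding Par_def by simp

lemma card_Par: "card (Par k n N) \<le> k * ((n + 1) ^ N) ^ 3"
proof -
  have "card (Par k n N) = card (SS n N) * (k * (card (SS n N) * card (SS n N)))"
    unfolding Par_def by (simp add: card_cartesian_product)
  also have "\<dots> \<le> (n + 1) ^ N * (k * ((n + 1) ^ N * (n + 1) ^ N))"
    using card_small_subsets[of n N] unfolding SS_def by (intro mult_mono) auto
  finally show ?thesis by (simp add: power3_eq_cube algebra_simps)
qed

lemma qq_bounds: "0 \<le> qq N" "qq N \<le> 1" "0 < qq N" "qq N < 1"
proof -
  have "(1::real) \<le> 2 ^ (2 * N + 1)" by (rule one_le_power) simp
  then have "1 / (2::real) ^ (2 * N + 1) \<le> 1" by simp
  moreover have "(2::real) \<le> 2 ^ (2 * N + 1)"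
    by (metis power_one_right power_increasing le_add2 one_le_numeral)
  then have "1 / (2::real) ^ (2 * N + 1) < 1" by (simp add: divide_less_eq del: power_Suc)
  ultimately show "0 \<le> qq N" "qq N \<le> 1" "0 < qq N" "qq N < 1" unfolding qq_def by auto
qed

lemma fail_bound:
  assumes c: "c \<in> cols k n" and s: "\<forall>u\<in>{1..k}. s \<le> card (cls n c u)"
  shows "real (card {F. F \<subseteq> Al n c \<and> \<not> ext_prop k N {1..n} (eo F) (Pc n c)})
     \<le> real (card (Par k n N)) * (2 ^ card (Al n c) * qq N ^ (s - N))"
proof -
  define Parc where "Parc = {p \<in> Par k n N. case p of (A, u, Sin, Sout) \<Rightarrow>
     Sin \<subseteq> A \<and> Sout \<subseteq> A \<and> (\<forall>a\<in>Sin. c a < u) \<and> (\<forall>a\<in>Sout. u < c a)}"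
  define Bz where "Bz = (\<lambda>A (z::nat). Al n c \<inter> (A \<times> {z} \<union> {z} \<times> A))"
  define Tz where "Tz = (\<lambda>Sin Sout (z::nat). Sin \<times> {z} \<union> {z} \<times> Sout)"
  define Fail where "Fail = (\<lambda>(A, u, Sin, Sout). {F. F \<subseteq> Al n c \<and>
     (\<forall>z\<in>cls n c u - A. F \<inter> Bz A z \<noteq> Tz Sin Sout z)})"
  have finParc: "finite Parc" unfolding Parc_def by simp
  have step1: "{F. F \<subseteq> Al n c \<and> \<not> ext_prop k N {1..n} (eo F) (Pc n c)} \<subseteq> (\<Union>p\<in>Parc. Fail p)"
  proof
    fix F assume "F \<in> {F. F \<subseteq> Al n c \<and> \<not> ext_prop k N {1..n} (eo F) (Pc n c)}"
    then have FA: "F \<subseteq> Al n c" and ne: "\<not> ext_prop k N {1..n} (eo F) (Pc n c)" by auto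
    from ne obtain A Sin Sout u where A: "finite A" "A \<subseteq> {1..n}" "card A \<le> N" and u: "u \<in> {1..k}"
      and S: "Sin \<subseteq> A" "Sout \<subseteq> A"
      and ci: "\<forall>a\<in>Sin. \<forall>v. Pc n c v a \<longrightarrow> v < u" and co: "\<forall>a\<in>Sout. \<forall>v. Pc n c v a \<longrightarrow> u < v"
      and nz: "\<not> (\<exists>z\<in>{1..n}. z \<notin> A \<and> Pc n c u z \<and> (\<forall>a\<in>A. eo F a z \<longleftrightarrow> a \<in> Sin) \<and>
                 (\<forall>a\<in>A. eo F z a \<longleftrightarrow> a \<in> Sout))"
      unfolding ext_prop_def by blast
    have ci': "\<forall>a\<in>Sin. c a < u" using ci S A(2) unfolding Pc_def by blast
    have co': "\<forall>a\<in>Sout. u < c a" using co S A(2) unfolding Pc_def by blast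
    have cardS: "card Sin \<le> N" "card Sout \<le> N"
      using card_mono[OF A(1) S(1)] card_mono[OF A(1) S(2)] A(3) by auto
    have pP: "(A, u, Sin, Sout) \<in> Parc"
      unfolding Parc_def Par_def SS_def using A u S cardS ci' co' by auto
    have allz: "\<forall>z\<in>cls n c u - A. F \<inter> Bz A z \<noteq> Tz Sin Sout z"
    proof (intro ballI notI)
      fix z assume z: "z \<in> cls n c u - A" and eq: "F \<inter> Bz A z = Tz Sin Sout z"
      have zn: "z \<in> {1..n}" "c z = u" "z \<notin> A" using z unfolding cls_def by auto
      have pin: "eo F a z \<longleftrightarrow> a \<in> Sin" if a: "a \<in> A" for a
      proof
        assume "eo F a z"
        then have "(a, z) \<in> F" unfolding eo_def by simp
        then have "(a, z) \<in> F \<inter> Bz A z" using FA a unfolding Bz_def by auto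
        then have "(a, z) \<in> Tz Sin Sout z" using eq by simp
        then show "a \<in> Sin" using zn(3) a unfolding Tz_def by auto
      next
        assume "a \<in> Sin"
        then have "(a, z) \<in> Tz Sin Sout z" unfolding Tz_def by simp
        then show "eo F a z" using eq unfolding eo_def by blast
      qed
      have pout: "eo F z a \<longleftrightarrow> a \<in> Sout" if a: "a \<in> A" for a
      proof
        assume "eo F z a"
        then have "(z, a) \<in> F" unfolding eo_def by simp
        then have "(z, a) \<in> F \<inter> Bz A z" using FA a unfolding Bz_def by auto
        then have "(z, a) \<in> Tz Sin Sout z" using eq by simp
        then show "a \<in> Sout" using zn(3) a unfolding Tz_def by auto
      next
        assume "a \<in> Sout"
        then have "(z, a) \<in> Tz Sin Sout z" unfolding Tz_def by simp
        then show "eo F z a" using eq unfolding eo_def by blast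
      qed
      have "Pc n c u z" using zn unfolding Pc_def by simp
      then show False using nz zn pin pout by blast
    qed
    have "F \<in> Fail (A, u, Sin, Sout)" unfolding Fail_def using FA allz by simp
    then show "F \<in> (\<Union>p\<in>Parc. Fail p)" using pP by blast
  qed
  define bnd where "bnd = 2 ^ card (Al n c) * qq N ^ (s - N)"
  have step2: "real (card (Fail p)) \<le> bnd" if p: "p \<in> Parc" for p
  proof -
    obtain A u Sin Sout where pe: "p = (A, u, Sin, Sout)" by (cases p) auto
    have A: "A \<subseteq> {1..n}" "card A \<le> N" and u: "u \<in> {1..k}" and S: "Sin \<subseteq> A" "Sout \<subseteq> A"
      and ci: "\<forall>a\<in>Sin. c a < u" and co: "\<forall>a\<in>Sout. u < c a"
      using p unfolding pe Parc_def Par_def SS_def by auto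
    have finA: "finite A" using A(1) finite_subset by blast
    define Z where "Z = cls n c u - A"
    have Zc: "\<forall>z\<in>Z. Bz A z \<subseteq> Al n c \<and> Tz Sin Sout z \<subseteq> Bz A z \<and> card (Bz A z) \<le> 2 * N + 1"
    proof
      fix z assume z: "z \<in> Z"
      then have zn: "z \<in> {1..n}" "c z = u" "z \<notin> A" unfolding Z_def cls_def by auto
      have "Tz Sin Sout z \<subseteq> Bz A z"
        unfolding Tz_def Bz_def Al_def using S A(1) ci co zn by auto
      moreover have "card (Bz A z) \<le> 2 * N + 1"
      proof -
        have "card (Bz A z) \<le> card (A \<times> {z} \<union> {z} \<times> A)"
          unfolding Bz_def by (rule card_mono) (use finA in auto)
        also have "\<dots> \<le> card (A \<times> {z}) + card ({z} \<times> A)" by (rule card_Un_le)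
        also have "\<dots> = card A + card A" by (simp add: card_cartesian_product)
        finally show ?thesis using A(2) by simp
      qed
      ultimately show "Bz A z \<subseteq> Al n c \<and> Tz Sin Sout z \<subseteq> Bz A z \<and> card (Bz A z) \<le> 2 * N + 1"
        unfolding Bz_def by simp
    qed
    have Zd: "\<forall>z\<in>Z. \<forall>z'\<in>Z. z \<noteq> z' \<longrightarrow> Bz A z \<inter> Bz A z' = {}"
      unfolding Z_def Bz_def by auto
    have finZ: "finite Z" unfolding Z_def by simp
    have FZ: "Fail p = {F. F \<subseteq> Al n c \<and> (\<forall>z\<in>Z. F \<inter> Bz A z \<noteq> Tz Sin Sout z)}"
      unfolding pe Fail_def Z_def by simp
    have "real (card (Fail p)) \<le> 2 ^ card (Al n c) * (1 - 1 / 2 ^ (2 * N + 1)) ^ card Z"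
      unfolding FZ by (rule avoid_count[OF finite_Al finZ Zc Zd])
    also have "\<dots> \<le> bnd"
      unfolding bnd_def
    proof (rule mult_left_mono)
      have "card (cls n c u) - card A \<le> card Z" unfolding Z_def by (rule diff_card_le_card_Diff) (rule finA)
      moreover have "s \<le> card (cls n c u)" using s u by blast
      ultimately have "s - N \<le> card Z" using A(2) by linarith
      then show "(1 - 1 / 2 ^ (2 * N + 1)) ^ card Z \<le> qq N ^ (s - N)"
        unfolding qq_def[symmetric] using qq_bounds[of N] by (intro power_decreasing) auto
    qed simp
    finally show ?thesis .
  qed
  have "card {F. F \<subseteq> Al n c \<and> \<not> ext_prop k N {1..n} (eo F) (Pc n c)} \<le> card (\<Union>p\<in>Parc. Fail p)"
  proof (rule card_mono[OF _ step1])
    have "Fail p \<subseteq> Pow (Al n c)" for p by (cases p) (auto simp: Fail_def)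
    then have "(\<Union>p\<in>Parc. Fail p) \<subseteq> Pow (Al n c)" by blast
    then show "finite (\<Union>p\<in>Parc. Fail p)" by (rule finite_subset) simp
  qed
  also have "\<dots> \<le> (\<Sum>p\<in>Parc. card (Fail p))" by (rule card_UN_le[OF finParc])
  finally have "real (card {F. F \<subseteq> Al n c \<and> \<not> ext_prop k N {1..n} (eo F) (Pc n c)}) \<le>
      real (\<Sum>p\<in>Parc. card (Fail p))" by (simp only: of_nat_le_iff)
  also have "\<dots> = (\<Sum>p\<in>Parc. real (card (Fail p)))" by (rule of_nat_sum)
  also have "\<dots> \<le> (\<Sum>p\<in>Parc. bnd)" by (rule sum_mono) (rule step2)
  also have "\<dots> = real (card Parc) * bnd" by simp
  also have "\<dots> \<le> real (card (Par k n N)) * bnd"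
  proof (rule mult_right_mono)
    show "real (card Parc) \<le> real (card (Par k n N))"
      unfolding Parc_def by (simp add: card_mono)
    show "0 \<le> bnd" unfolding bnd_def using qq_bounds by simp
  qed
  finally show ?thesis unfolding bnd_def .
qed

lemma lim_g1: "c > 0 \<Longrightarrow> (\<lambda>n. exp (b * real n - c * real n ^ 2)) \<longlonglongrightarrow> 0" for b c :: real
  by real_asymp
lemma lim_g2: "c > 0 \<Longrightarrow> (\<lambda>n. K * (real n + 1) ^ a * exp (- c * real n)) \<longlonglongrightarrow> 0" for K c :: real and a :: nat
  by real_asymp

lemma split_card:
  fixes n :: nat
  shows "card {(E, P). Tk_coloured_digraph k {1..n} E P \<and> R E P} +
   card {(E, P). Tk_coloured_digraph k {1..n} E P \<and> \<not> R E P} =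
   card {(E, P). Tk_coloured_digraph k {1..n} E P}"
proof -
  have "card {F. F \<subseteq> Al n c \<and> R (eo F) (Pc n c)} + card {F. F \<subseteq> Al n c \<and> \<not> R (eo F) (Pc n c)}
      = 2 ^ card (Al n c)" for c
  proof -
    have "card {F. F \<subseteq> Al n c \<and> R (eo F) (Pc n c)} + card {F. F \<subseteq> Al n c \<and> \<not> R (eo F) (Pc n c)}
        = card ({F. F \<subseteq> Al n c \<and> R (eo F) (Pc n c)} \<union> {F. F \<subseteq> Al n c \<and> \<not> R (eo F) (Pc n c)})"
      by (rule card_Un_disjoint[symmetric]) auto
    also have "{F. F \<subseteq> Al n c \<and> R (eo F) (Pc n c)} \<union> {F. F \<subseteq> Al n c \<and> \<not> R (eo F) (Pc n c)} = Pow (Al n c)"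
      by auto
    finally show ?thesis by (simp add: card_Pow)
  qed
  then show ?thesis
    unfolding card_structs[of k n R] card_structs[of k n "\<lambda>E P. \<not> R E P"] card_all_structs
    by (simp add: sum.distrib[symmetric])
qed

lemma total_pos: "k \<ge> 1 \<Longrightarrow> 0 < card {(E, P). Tk_coloured_digraph k {1..n::nat} E P}"
proof -
  assume k: "k \<ge> 1"
  have "(2::nat) ^ card (Al n (c0 k n)) \<le> (\<Sum>c\<in>cols k n. 2 ^ card (Al n c))"
    by (rule member_le_sum) (use c0_cols[OF k] in auto)
  moreover have "0 < (2::nat) ^ card (Al n (c0 k n))" by simp
  ultimately show ?thesis unfolding card_all_structs by linarith
qed

lemma bad_bound:
  fixes n :: nat
  assumes k: "k \<ge> 1"
  shows "real (card {(E, P). Tk_coloured_digraph k {1..n} E P \<and> \<not> ext_prop k N {1..n} E P})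
    \<le> real (card {(E, P). Tk_coloured_digraph k {1..n} E P}) *
       (real k ^ n * 2 powr ((real n - real n ^ 2 / (4 * real k ^ 2)) / 2) +
        real (card (Par k n N)) * qq N ^ (n div (2 * k) - N))"
proof -
  define b where "b = (\<lambda>c. card {F. F \<subseteq> Al n c \<and> \<not> ext_prop k N {1..n} (eo F) (Pc n c)})"
  define w where "w = (\<lambda>c. (2::real) ^ card (Al n c))"
  define T where "T = (\<Sum>c\<in>cols k n. w c)"
  define X where "X = 2 powr ((real n - real n ^ 2 / (4 * real k ^ 2)) / 2)"
  define Y where "Y = real (card (Par k n N)) * qq N ^ (n div (2 * k) - N)"
  have Teq: "real (card {(E, P). Tk_coloured_digraph k {1..n} E P}) = T"
    unfolding card_all_structs T_def w_def by simp
  have beq: "real (card {(E, P). Tk_coloured_digraph k {1..n} E P \<and> \<not> ext_prop k N {1..n} E P})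
     = (\<Sum>c\<in>cols k n. real (b c))"
    unfolding card_structs[of k n "\<lambda>E P. \<not> ext_prop k N {1..n} E P"] b_def by simp
  define BC where "BC = {c \<in> cols k n. \<exists>u\<in>{1..k}. real (card (cls n c u)) < real n / (2 * real k)}"
  define GC where "GC = cols k n - BC"
  have BCsub: "BC \<subseteq> cols k n" unfolding BC_def by auto
  have fin: "finite BC" "finite GC" unfolding BC_def GC_def by auto
  have split: "(\<Sum>c\<in>cols k n. real (b c)) = (\<Sum>c\<in>BC. real (b c)) + (\<Sum>c\<in>GC. real (b c))"
  proof -
    have "cols k n = BC \<union> GC" "BC \<inter> GC = {}" unfolding GC_def using BCsub by auto
    then show ?thesis using fin by (simp add: sum.union_disjoint)
  qed
  have bw: "real (b c) \<le> w c" for c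
  proof -
    have "b c \<le> card (Pow (Al n c))" unfolding b_def by (rule card_mono) auto
    then show ?thesis unfolding w_def by (simp add: card_Pow)
  qed
  have wpos: "0 \<le> w c" for c unfolding w_def by simp
  have w0T: "w (c0 k n) \<le> T" unfolding T_def
    by (rule member_le_sum) (use c0_cols[OF k] wpos in auto)
  have wBC: "w c \<le> w (c0 k n) * X" if c: "c \<in> BC" for c
  proof -
    obtain u where u: "u \<in> {1..k}" "real (card (cls n c u)) < real n / (2 * real k)" and cc: "c \<in> cols k n"
      using c unfolding BC_def by auto
    have g: "real (card (Al n c)) \<le> real (card (Al n (c0 k n))) + (real n - real n ^ 2 / (4 * real k ^ 2)) / 2"
      using bad_gap[OF cc k u] by (simp add: field_simps)
    have "w c = 2 powr real (card (Al n c))" unfolding w_def by (simp add: powr_realpow)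
    also have "\<dots> \<le> 2 powr (real (card (Al n (c0 k n))) + (real n - real n ^ 2 / (4 * real k ^ 2)) / 2)"
      using g by (intro powr_mono) auto
    also have "\<dots> = w (c0 k n) * X" unfolding w_def X_def by (simp add: powr_add powr_realpow)
    finally show ?thesis .
  qed
  have "(\<Sum>c\<in>BC. real (b c)) \<le> (\<Sum>c\<in>BC. w (c0 k n) * X)"
    by (rule sum_mono) (use bw wBC order_trans in blast)
  also have "\<dots> = real (card BC) * (w (c0 k n) * X)" by simp
  also have "\<dots> \<le> real k ^ n * (T * X)"
  proof (rule mult_mono)
    have "card BC \<le> card (cols k n)" using BCsub by (intro card_mono) auto
    then show "real (card BC) \<le> real k ^ n" using card_cols[of k n] by (metis of_nat_le_iff of_nat_power)
    show "w (c0 k n) * X \<le> T * X" using w0T by (intro mult_right_mono) (auto simp: X_def)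
  qed (auto simp: X_def w_def T_def intro!: sum_nonneg)
  finally have bBC: "(\<Sum>c\<in>BC. real (b c)) \<le> real k ^ n * (T * X)" .
  have bGC1: "real (b c) \<le> w c * Y" if c: "c \<in> GC" for c
  proof -
    have cc: "c \<in> cols k n" and big: "\<forall>u\<in>{1..k}. real n / (2 * real k) \<le> real (card (cls n c u))"
      using c unfolding GC_def BC_def by auto
    have "\<forall>u\<in>{1..k}. n div (2 * k) \<le> card (cls n c u)"
    proof
      fix u assume "u \<in> {1..k}"
      have "real (n div (2 * k)) \<le> real n / real (2 * k)" by (rule of_nat_div_le_of_nat)
      also have "\<dots> \<le> real (card (cls n c u))" using big \<open>u \<in> {1..k}\<close> by simp
      finally show "n div (2 * k) \<le> card (cls n c u)" by simp
    qed
    from fail_bound[OF cc this, of N] show ?thesis unfolding b_def w_def Y_def by (simp add: algebra_simps)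
  qed
  have "(\<Sum>c\<in>GC. real (b c)) \<le> (\<Sum>c\<in>GC. w c * Y)" by (rule sum_mono) (rule bGC1)
  also have "\<dots> \<le> (\<Sum>c\<in>cols k n. w c * Y)"
    by (rule sum_mono2) (use wpos qq_bounds in \<open>auto simp: GC_def Y_def\<close>)
  also have "\<dots> = T * Y" unfolding T_def by (simp add: sum_distrib_right)
  finally have bGC: "(\<Sum>c\<in>GC. real (b c)) \<le> T * Y" .
  show ?thesis unfolding Teq beq split using bBC bGC unfolding X_def[symmetric] Y_def[symmetric]
    by (simp add: algebra_simps)
qed

lemma div_lower: "d > 0 \<Longrightarrow> real n / real d - 1 \<le> real (n div d)"
proof -
  assume d: "d > 0"
  have "n = n div d * d + n mod d" by simp
  then have "real n = real (n div d) * real d + real (n mod d)" by (metis of_nat_add of_nat_mult)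
  moreover have "real (n mod d) < real d" using d by simp
  ultimately have "real n < (real (n div d) + 1) * real d" by (simp add: algebra_simps)
  then have "real n / real d < real (n div d) + 1" using d by (simp add: divide_less_eq)
  then show ?thesis by simp
qed

lemma bad_ratio_limit:
  assumes k: "k \<ge> 1"
  shows "(\<lambda>n. real (card {(E, P). Tk_coloured_digraph k {1..n} E P \<and> \<not> ext_prop k N {1..n} E P}) /
              real (card {(E, P). Tk_coloured_digraph k {1..n} E P})) \<longlonglongrightarrow> 0"
proof -
  define r where "r = (\<lambda>n::nat. real (card {(E, P). Tk_coloured_digraph k {1..n} E P \<and> \<not> ext_prop k N {1..n} E P}) /
              real (card {(E, P). Tk_coloured_digraph k {1..n} E P}))"
  define b where "b = ln (real k) + ln 2 / 2"
  define c where "c = ln 2 / (8 * real k ^ 2)"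
  define c' where "c' = - ln (qq N) / (2 * real k)"
  define K where "K = real k * exp (- (real N + 1) * ln (qq N))"
  define h where "h = (\<lambda>n. exp (b * real n - c * real n ^ 2) + K * (real n + 1) ^ (3 * N) * exp (- c' * real n))"
  have kpos: "real k > 0" using k by simp
  have qb: "0 < qq N" "qq N < 1" using qq_bounds by auto
  have cpos: "c > 0" unfolding c_def using kpos by simp
  have "ln (qq N) / (2 * real k) < 0" using ln_less_zero[OF qb] kpos by (simp add: divide_less_0_iff)
  then have c'pos: "c' > 0" unfolding c'_def by simp
  have hlim: "h \<longlonglongrightarrow> 0"
    unfolding h_def using tendsto_add[OF lim_g1[OF cpos, of b] lim_g2[OF c'pos, of K "3 * N"]] by simp
  have rbound: "r n \<le> h n" for n :: nat
  proof -
    define T where "T = real (card {(E, P). Tk_coloured_digraph k {1..n} E P})"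
    have Tpos: "T > 0" unfolding T_def using total_pos[OF k, of n] by simp
    have "r n \<le> real k ^ n * 2 powr ((real n - real n ^ 2 / (4 * real k ^ 2)) / 2) +
        real (card (Par k n N)) * qq N ^ (n div (2 * k) - N)"
      unfolding r_def T_def[symmetric] using bad_bound[OF k, of n N] Tpos unfolding T_def[symmetric]
      by (simp add: divide_le_eq mult.commute)
    also have "real k ^ n * 2 powr ((real n - real n ^ 2 / (4 * real k ^ 2)) / 2) = exp (b * real n - c * real n ^ 2)"
    proof -
      have "real k ^ n = exp (real n * ln (real k))" using kpos by (simp add: exp_of_nat_mult)
      moreover have "2 powr ((real n - real n ^ 2 / (4 * real k ^ 2)) / 2) =
          exp ((real n - real n ^ 2 / (4 * real k ^ 2)) / 2 * ln 2)" by (simp add: powr_def)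
      ultimately have "real k ^ n * 2 powr ((real n - real n ^ 2 / (4 * real k ^ 2)) / 2) =
          exp (real n * ln (real k) + (real n - real n ^ 2 / (4 * real k ^ 2)) / 2 * ln 2)"
        by (simp add: exp_add)
      also have "real n * ln (real k) + (real n - real n ^ 2 / (4 * real k ^ 2)) / 2 * ln 2 = b * real n - c * real n ^ 2"
        unfolding b_def c_def using kpos by (simp add: field_simps)
      finally show ?thesis .
    qed
    also have "real (card (Par k n N)) * qq N ^ (n div (2 * k) - N) \<le> K * (real n + 1) ^ (3 * N) * exp (- c' * real n)"
    proof -
      have p1: "real (card (Par k n N)) \<le> real k * (real n + 1) ^ (3 * N)"
      proof -
        have "real (card (Par k n N)) \<le> real (k * ((n + 1) ^ N) ^ 3)" using card_Par[of k n N] by linarith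
        also have "\<dots> = real k * (real n + 1) ^ (3 * N)" by (simp add: power_mult[symmetric] mult.commute add.commute)
        finally show ?thesis .
      qed
      have p2: "qq N ^ (n div (2 * k) - N) \<le> qq N powr (real n / (2 * real k) - real N - 1)"
      proof -
        have "real n / real (2 * k) - 1 \<le> real (n div (2 * k))" by (rule div_lower) (use k in simp)
        then have "real n / (2 * real k) - real N - 1 \<le> real (n div (2 * k) - N)" by (simp add: of_nat_diff)
        then have "qq N powr real (n div (2 * k) - N) \<le> qq N powr (real n / (2 * real k) - real N - 1)"
          using qb by (intro powr_mono') auto
        then show ?thesis using qb by (simp add: powr_realpow)
      qed
      have p3: "real k * (real n + 1) ^ (3 * N) * qq N powr (real n / (2 * real k) - real N - 1) =
          K * (real n + 1) ^ (3 * N) * exp (- c' * real n)"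
      proof -
        have "qq N powr (real n / (2 * real k) - real N - 1) = exp ((real n / (2 * real k) - real N - 1) * ln (qq N))"
          using qb by (simp add: powr_def)
        also have "(real n / (2 * real k) - real N - 1) * ln (qq N) = - (real N + 1) * ln (qq N) + (- c' * real n)"
          unfolding c'_def using kpos by (simp add: field_simps)
        finally have e: "qq N powr (real n / (2 * real k) - real N - 1) =
            exp (- (real N + 1) * ln (qq N)) * exp (- c' * real n)" by (simp only: exp_add)
        show ?thesis unfolding K_def e by (simp add: mult_ac)
      qed
      have "real (card (Par k n N)) * qq N ^ (n div (2 * k) - N) \<le>
          real k * (real n + 1) ^ (3 * N) * qq N powr (real n / (2 * real k) - real N - 1)"
        using p1 p2 qb by (intro mult_mono) auto
      then show ?thesis using p3 by simp
    qed
    finally show ?thesis unfolding h_def by simp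
  qed
  have rpos: "0 \<le> r n" for n :: nat unfolding r_def by simp
  have "r \<longlonglongrightarrow> 0"
    by (rule tendsto_sandwich[of "\<lambda>_. 0" r sequentially h]) (use rpos rbound hlim in auto)
  then show ?thesis unfolding r_def .
qed

lemma ratio_eq: "a + b = t \<Longrightarrow> t > 0 \<Longrightarrow> a / t = 1 - b / (t::real)"
  by (simp add: field_simps)

lemma good_ratio_limit:
  assumes k: "k \<ge> 1"
  shows "(\<lambda>n. real (card {(E, P). Tk_coloured_digraph k {1..n} E P \<and> ext_prop k N {1..n} E P}) /
              real (card {(E, P). Tk_coloured_digraph k {1..n} E P})) \<longlonglongrightarrow> 1"
proof -
  have eq: "real (card {(E, P). Tk_coloured_digraph k {1..n} E P \<and> ext_prop k N {1..n} E P}) /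
              real (card {(E, P). Tk_coloured_digraph k {1..n} E P}) =
        1 - real (card {(E, P). Tk_coloured_digraph k {1..n} E P \<and> \<not> ext_prop k N {1..n} E P}) /
              real (card {(E, P). Tk_coloured_digraph k {1..n} E P})" for n :: nat
  proof (rule ratio_eq)
    have "card {(E, P). Tk_coloured_digraph k {1..n} E P \<and> ext_prop k N {1..n} E P} +
        card {(E, P). Tk_coloured_digraph k {1..n} E P \<and> \<not> ext_prop k N {1..n} E P} =
        card {(E, P). Tk_coloured_digraph k {1..n} E P}"
      by (rule split_card[of k n "\<lambda>E P. ext_prop k N {1..n} E P"])
    then show "real (card {(E, P). Tk_coloured_digraph k {1..n} E P \<and> ext_prop k N {1..n} E P}) +
        real (card {(E, P). Tk_coloured_digraph k {1..n} E P \<and> \<not> ext_prop k N {1..n} E P}) =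
        real (card {(E, P). Tk_coloured_digraph k {1..n} E P})"
      by (simp only: of_nat_add[symmetric])
    show "real (card {(E, P). Tk_coloured_digraph k {1..n} E P}) > 0" using total_pos[OF k, of n] by simp
  qed
  show ?thesis unfolding eq using tendsto_diff[OF tendsto_const bad_ratio_limit[OF k, of N], of 1] by simp
qed

lemma transfer_C:
  assumes k: "k \<ge> 1" and C: "is_C_Tk k V E P" and fv: "free_vars \<phi> = {}"
    and T: "Tk_coloured_digraph k {1..n} E' P'" and ex: "ext_prop k (qd \<phi>) {1..n} E' P'"
  shows "models {1..n} E' P' \<phi> \<longleftrightarrow> models V E P \<phi>"
proof -
  have CT: "Tk_coloured_digraph k V E P" using C unfolding is_C_Tk_def by blast
  show ?thesis by (rule transfer[OF T CT ex C_ext[OF C] k fv order.refl])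
qed

lemma sentence_iff:
  assumes k: "k \<ge> 1" and C: "is_C_Tk k V E P" and s: "sentence k \<phi>"
  shows "almost_sure k \<phi> \<longleftrightarrow> models V E P \<phi>"
proof -
  have fv: "free_vars \<phi> = {}" using s unfolding sentence_def by blast
  define N where "N = qd \<phi>"
  define T where "T = (\<lambda>n::nat. {(E', P'). Tk_coloured_digraph k {1..n} E' P'})"
  define G where "G = (\<lambda>n::nat. {(E', P'). Tk_coloured_digraph k {1..n} E' P' \<and> ext_prop k N {1..n} E' P'})"
  define B where "B = (\<lambda>n::nat. {(E', P'). Tk_coloured_digraph k {1..n} E' P' \<and> \<not> ext_prop k N {1..n} E' P'})"
  define M where "M = (\<lambda>n::nat. {(E', P'). Tk_coloured_digraph k {1..n} E' P' \<and> models {1..n} E' P' \<phi>})"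
  have finT: "finite (T n)" for n using total_pos[OF k, of n] unfolding T_def by (rule card_ge_0_finite)
  have Tpos: "real (card (T n)) > 0" for n using total_pos[OF k, of n] unfolding T_def by simp
  have MT: "M n \<subseteq> T n" for n unfolding M_def T_def by auto
  have gl: "(\<lambda>n. real (card (G n)) / real (card (T n))) \<longlonglongrightarrow> 1"
    unfolding G_def T_def by (rule good_ratio_limit[OF k])
  have bl: "(\<lambda>n. real (card (B n)) / real (card (T n))) \<longlonglongrightarrow> 0"
    unfolding B_def T_def by (rule bad_ratio_limit[OF k])
  have as: "almost_sure k \<phi> \<longleftrightarrow> (\<lambda>n. real (card (M n)) / real (card (T n))) \<longlonglongrightarrow> 1"
    unfolding almost_sure_def M_def T_def by simp
  show ?thesis
  proof (cases "models V E P \<phi>")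
    case True
    have GM: "G n \<subseteq> M n" for n
    proof
      fix p assume "p \<in> G n"
      then obtain E' P' where p: "p = (E', P')" "Tk_coloured_digraph k {1..n} E' P'" "ext_prop k N {1..n} E' P'"
        unfolding G_def by auto
      then have "models {1..n} E' P' \<phi>" using transfer_C[OF k C fv p(2)] True unfolding N_def by blast
      then show "p \<in> M n" using p unfolding M_def by simp
    qed
    have lo: "real (card (G n)) / real (card (T n)) \<le> real (card (M n)) / real (card (T n))" for n
      using card_mono[OF finite_subset[OF MT finT] GM] Tpos[of n] by (simp add: divide_right_mono)
    have hi: "real (card (M n)) / real (card (T n)) \<le> 1" for n
      using card_mono[OF finT MT] Tpos[of n] by simp
    have "(\<lambda>n. real (card (M n)) / real (card (T n))) \<longlonglongrightarrow> 1"
      by (rule tendsto_sandwich[OF _ _ gl tendsto_const]) (use lo hi in auto)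
    then show ?thesis using as True by simp
  next
    case False
    have MB: "M n \<subseteq> B n" for n
    proof
      fix p assume "p \<in> M n"
      then obtain E' P' where p: "p = (E', P')" "Tk_coloured_digraph k {1..n} E' P'" "models {1..n} E' P' \<phi>"
        unfolding M_def by auto
      have "\<not> ext_prop k N {1..n} E' P'"
        using transfer_C[OF k C fv p(2)] False p(3) unfolding N_def by blast
      then show "p \<in> B n" using p unfolding B_def by simp
    qed
    have BT: "B n \<subseteq> T n" for n unfolding B_def T_def by auto
    have le: "real (card (M n)) / real (card (T n)) \<le> real (card (B n)) / real (card (T n))" for n
      using card_mono[OF finite_subset[OF BT finT] MB] Tpos[of n] by (simp add: divide_right_mono)
    have "\<not> (\<lambda>n. real (card (M n)) / real (card (T n))) \<longlonglongrightarrow> 1"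
    proof
      assume "(\<lambda>n. real (card (M n)) / real (card (T n))) \<longlonglongrightarrow> 1"
      from LIMSEQ_le[OF this bl] le have "(1::real) \<le> 0" by blast
      then show False by simp
    qed
    then show ?thesis using as False by simp
  qed
qed

theorem corollary4p14:
  fixes k :: nat and V :: "'a set" and E :: "'a \<Rightarrow> 'a \<Rightarrow> bool" and P :: "nat \<Rightarrow> 'a \<Rightarrow> bool"
  assumes "k \<ge> 1"
    and "is_C_Tk k V E P"
  shows "{\<phi>. sentence k \<phi> \<and> almost_sure k \<phi>} = {\<phi>. sentence k \<phi> \<and> models V E P \<phi>}"
  using sentence_iff[OF assms] by blast

end
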